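(* Let $n\ge 1$ and consider a bin $B=(l_s,u_s]\times(l_t,u_t]\subseteq[0,n]^2$ with $l_s<u_s$, $l_t<u_t$, containing $o_i\ge 1$ observed rank pairs $(s_{i1},t_{i1}),\dots,(s_{io_i},t_{io_i})\in B$. Let $e_i=(u_s-l_s)(u_t-l_t)/n$ be its expected count. For a vertical split at $c\in(l_s,u_s)$, let $o_{i-}(c)=\#\{k: s_{ik}\le c\}$, $o_{i+}(c)=o_i-o_{i-}(c)$, $e_{i-}(c)=(c-l_s)(u_t-l_t)/n$ and $e_{i+}(c)=(u_s-c)(u_t-l_t)/n$. With the chi score $\mathrm{chi}(o,e)=(o-e)^2/e$, define $$\delta_i(c,\mathrm{chi})=\mathrm{chi}\big(o_{i+}(c),e_{i+}(c)\big)+\mathrm{chi}\big(o_{i-}(c),e_{i-}(c)\big)-\mathrm{chi}(o_i,e_i).$$ Then any $c^*\in(l_s,u_s)$ maximizing $\delta_i(c,\mathrm{chi})$ over $c\in(l_s,u_s)$ is one of the point coordinates $s_{i1},\dots,s_{io_i}$. The analogous statement holds for horizontal splits at $c\in(l_t,u_t)$ (with the roles of $s$ and $t$ interchanged), where the maximizer is one of $t_{i1},\dots,t_{io_i}$.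
   Context: Observations $(x_k,y_k)$, $k=1,\dots,n$, are converted to marginal ranks $s_k,t_k\in\{1,\dots,n\}$ (ties broken randomly), so under independence the rank pairs are uniform on the rank space $[0,n]^2$ and the expected number of points in a region of area $a$ is $a/n$. A bin is a rectangle $(l_s,u_s]\times(l_t,u_t]$; splitting it by a vertical line at $c$ produces a lower bin $(l_s,c]\times(l_t,u_t]$ and an upper bin $(c,u_s]\times(l_t,u_t]$ (a point with coordinate equal to $c$ is counted in the lower bin); horizontal splits are defined analogously in the $t$ coordinate. *)

theory Defs
  imports Complex_Main
begin

definition chi :: "real \<Rightarrow> real \<Rightarrow> real" where
  "chi m e = (m - e)^2 / e"

definition lower_count :: "(nat \<Rightarrow> nat) \<Rightarrow> nat \<Rightarrow> real \<Rightarrow> nat" where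
  "lower_count x m c = card {k \<in> {1..m}. real (x k) \<le> c}"

text \<open>Score gain delta of splitting the bin at c along the coordinate x,
  where the split direction has bounds (la, ua] and the other direction (lb, ub].\<close>
definition delta_split ::
  "nat \<Rightarrow> nat \<Rightarrow> (nat \<Rightarrow> nat) \<Rightarrow> real \<Rightarrow> real \<Rightarrow> real \<Rightarrow> real \<Rightarrow> real \<Rightarrow> real" where
  "delta_split n m x la ua lb ub c =
     chi (real m - real (lower_count x m c)) ((ua - c) * (ub - lb) / real n)
   + chi (real (lower_count x m c)) ((c - la) * (ub - lb) / real n)
   - chi (real m) ((ua - la) * (ub - lb) / real n)"

end

theory Submission
  imports Defs
begin


lemma chi_exp: "e \<noteq> 0 \<Longrightarrow> chi y e = y^2/e - 2*y + e"
  unfolding chi_def by (simp add: field_simps power2_eq_square)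

lemma inv_conv: fixes e b :: real assumes "0 < e" "e < b" shows "1/(b+e) + 1/(b-e) - 2/b > 0"
proof -
  have "1/(b+e) + 1/(b-e) - 2/b = 2*e^2/(b*((b+e)*(b-e)))"
  proof -
    have "b+e \<noteq> 0" "b-e \<noteq> 0" "b \<noteq> 0" "b*b - e*e \<noteq> 0" "b*(b*b) - b*(e*e) \<noteq> 0" using assms
      by (auto simp: algebra_simps) (smt (verit) mult_strict_mono, smt (verit) mult_pos_pos mult_strict_mono)
    then show ?thesis by (simp add: field_simps power2_eq_square)
  qed
  also have "\<dots> > 0" using assms by (intro divide_pos_pos mult_pos_pos) auto
  finally show ?thesis .
qed

lemma alg:
  fixes P Q a b e W :: real
  assumes "0<e" "e<a" "e<b" "W>0" "P \<noteq> 0 \<or> Q \<noteq> 0"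
  shows "chi P ((b+e)*W) + chi Q ((a-e)*W) + (chi P ((b-e)*W) + chi Q ((a+e)*W))
         > 2*(chi P (b*W) + chi Q (a*W))"
proof -
  have h: "chi P ((b+e)*W) + chi Q ((a-e)*W) + (chi P ((b-e)*W) + chi Q ((a+e)*W))
         - 2*(chi P (b*W) + chi Q (a*W))
     = P^2/W * (1/(b+e) + 1/(b-e) - 2/b) + Q^2/W * (1/(a+e) + 1/(a-e) - 2/a)"
  proof -
    have cw: "chi y (x*W) = y^2/W * (1/x) - 2*y + x*W" if "x \<noteq> 0" for x y
      using that assms(4) by (simp add: chi_exp)
    have nz: "b+e \<noteq> 0" "b-e \<noteq> 0" "a+e \<noteq> 0" "a-e \<noteq> 0" "a \<noteq> 0" "b \<noteq> 0" using assms by auto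
    show ?thesis unfolding cw[OF nz(1)] cw[OF nz(2)] cw[OF nz(3)] cw[OF nz(4)] cw[OF nz(5)] cw[OF nz(6)]
      by (simp add: algebra_simps)
  qed
  have p1: "P^2/W * (1/(b+e) + 1/(b-e) - 2/b) \<ge> 0"
    using inv_conv[of e b] assms by simp
  have p2: "Q^2/W * (1/(a+e) + 1/(a-e) - 2/a) \<ge> 0"
    using inv_conv[of e a] assms by simp
  have "P^2/W * (1/(b+e) + 1/(b-e) - 2/b) > 0 \<or> Q^2/W * (1/(a+e) + 1/(a-e) - 2/a) > 0"
    using assms inv_conv[of e a] inv_conv[of e b] by auto
  then show ?thesis using h p1 p2 by linarith
qed


lemma main:
  fixes x :: "nat \<Rightarrow> nat" and la ua lb ub c :: real
  assumes "n \<ge> 1" "la < ua" "lb < ub" "m \<ge> 1" "c \<in> {la<..<ua}"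
    and mx: "\<forall>c'\<in>{la<..<ua}. delta_split n m x la ua lb ub c' \<le> delta_split n m x la ua lb ub c"
  shows "\<exists>k\<in>{1..m}. c = real (x k)"
proof (rule ccontr)
  assume nx: "\<not> (\<exists>k\<in>{1..m}. c = real (x k))"
  define D where "D = (\<lambda>k. \<bar>real (x k) - c\<bar>) ` {1..m} \<union> {c - la, ua - c}"
  have fD: "finite D" "D \<noteq> {}" unfolding D_def by auto
  have posD: "\<forall>d\<in>D. d > 0" unfolding D_def using nx assms(5) by auto
  define e where "e = Min D / 2"
  have "Min D > 0" using fD posD by simp
  hence e0: "e > 0" unfolding e_def by simp
  have eD: "\<And>d. d \<in> D \<Longrightarrow> e < d" unfolding e_def using fD posD
    by (metis Min_le field_sum_of_halves half_gt_zero less_add_same_cancel1 linorder_not_le order_le_less_trans)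
  have ea: "e < c - la" and eb: "e < ua - c" using eD unfolding D_def by auto
  have ek: "\<And>k. k \<in> {1..m} \<Longrightarrow> e < \<bar>real (x k) - c\<bar>" using eD unfolding D_def by auto
  have Leq: "lower_count x m (c + d) = lower_count x m c" if "\<bar>d\<bar> \<le> e" for d
  proof -
    have "{k \<in> {1..m}. real (x k) \<le> c + d} = {k \<in> {1..m}. real (x k) \<le> c}"
      using ek that by (auto; smt (verit))
    thus ?thesis unfolding lower_count_def by simp
  qed
  define L where "L = lower_count x m c"
  define W where "W = (ub - lb) / real n"
  have W0: "W > 0" using assms unfolding W_def by simp
  have PQ: "real m - real L \<noteq> 0 \<or> real L \<noteq> 0" using assms(4) by auto
  have ds: "delta_split n m x la ua lb ub (c + d) =
     chi (real m - real L) ((ua - c - d) * W) + chi (real L) ((c - la + d) * W)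
     - chi (real m) ((ua - la) * W)" if "\<bar>d\<bar> \<le> e" for d
    using Leq[OF that] unfolding delta_split_def L_def W_def
    by (simp add: algebra_simps)
  have A: "chi (real m - real L) (((ua - c)+e)*W) + chi (real L) (((c - la)-e)*W)
     + (chi (real m - real L) (((ua - c)-e)*W) + chi (real L) (((c - la)+e)*W))
     > 2*(chi (real m - real L) ((ua - c)*W) + chi (real L) ((c - la)*W))"
    using alg[OF e0 ea eb W0 PQ] .
  have "c + (-e) \<in> {la<..<ua}" "c + e \<in> {la<..<ua}" using ea eb e0 by auto
  hence d1: "delta_split n m x la ua lb ub (c + (-e)) \<le> delta_split n m x la ua lb ub (c + 0)"
    and d2: "delta_split n m x la ua lb ub (c + e) \<le> delta_split n m x la ua lb ub (c + 0)"
    using mx by auto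
  have "((ua - c)+e) = ua - c - (-e)" "(c - la) - e = c - la + (-e)"
       "(ua - c)-e = ua - c - e" "(c-la)+e = c - la + e" "ua - c = ua - c - 0" "c - la = c - la + 0"
    by simp_all
  then show False using A d1 d2 ds[of "-e"] ds[of e] ds[of 0] e0 by simp
qed

theorem proposition1:
  fixes n m :: nat and s t :: "nat \<Rightarrow> nat"
    and ls us lt ut c :: real
  assumes "n \<ge> 1"
    and "0 \<le> ls" "ls < us" "us \<le> real n"
    and "0 \<le> lt" "lt < ut" "ut \<le> real n"
    and "m \<ge> 1"
    and "\<And>k. k \<in> {1..m} \<Longrightarrow> s k \<in> {1..n} \<and> t k \<in> {1..n}"
    and "\<And>k. k \<in> {1..m} \<Longrightarrow> ls < real (s k) \<and> real (s k) \<le> us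
                                   \<and> lt < real (t k) \<and> real (t k) \<le> ut"
  shows "(c \<in> {ls<..<us} \<and>
           (\<forall>c'\<in>{ls<..<us}. delta_split n m s ls us lt ut c' \<le> delta_split n m s ls us lt ut c)
           \<longrightarrow> (\<exists>k\<in>{1..m}. c = real (s k)))
       \<and> (c \<in> {lt<..<ut} \<and>
           (\<forall>c'\<in>{lt<..<ut}. delta_split n m t lt ut ls us c' \<le> delta_split n m t lt ut ls us c)
           \<longrightarrow> (\<exists>k\<in>{1..m}. c = real (t k)))"
  using main[of n ls us lt ut m c s] main[of n lt ut ls us m c t] assms by blast

end
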